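(* In the Setting below, $N_{\mathcal M}$ is a subalgebra of $\mathcal M$ (i.e. $N_{\mathcal M}N_{\mathcal M}\subseteq N_{\mathcal M}$) and $N_{\mathcal M}J_{\mathcal M}\subseteq J_{\mathcal M}$.
   Context: Setting. Let $\mathbb F$ be a field of characteristic different from $2$ and $3$. A Malcev algebra is an anticommutative algebra $\mathcal M$ over $\mathbb F$ satisfying $(xz)(yt)=((xy)z)t+((yz)t)x+((zt)x)y+((tx)y)z$. Products are left-normed: $xyz=(xy)z$, $xyzt=((xy)z)t$. Put $J(x,y,z)=xyz+yzx+zxy$ (the Jacobian), $\{x,y,z\}=xyz-xzy+2x(yz)$, and $h(y,z,t,x,u)=\{yz,t,u\}x+\{yz,t,x\}u+\{yx,z,u\}t+\{yu,z,x\}t$. The variety $\mathcal H$ consists of the Malcev algebras satisfying $h(y,z,t,x,u)=0$ identically. The centroid $\Gamma(\mathcal M)$ is the set of linear maps $\alpha$ of $\mathcal M$ (written on the right) with $(xy)\alpha=x(y\alpha)=(x\alpha)y$ for all $x,y$. Put $p(x,y,z,t)=-\{zt,x,y\}-\{yt,z,x\}+\{xt,y,z\}$ and define the operator $\alpha(y,z,t)$ by $x\,\alpha(y,z,t)=p(x,y,z,t)$; for $\mathcal M\in\mathcal H$ these operators lie in $\Gamma(\mathcal M)$. Let $L=\mathfrak{sl}_2(\mathbb F)$ with basis $E,H,F$ and products $EH=E$, $FH=-F$, $EF=\tfrac12 H$. Standing assumption: $\mathcal M\in\mathcal H$ contains $L$ as a subalgebra and $mL\neq 0$ for every $0\neq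 m\in\mathcal M$. Define $N_{\mathcal M}=\{m\in\mathcal M: J(m,a,b)=0\ \forall a,b\in L\}$ and $J_{\mathcal M}=\{m\in\mathcal M:\{m,a,b\}=0\ \forall a,b\in L\}$. Known facts (from prior work): $\mathcal M=N_{\mathcal M}\oplus J_{\mathcal M}$; $J_{\mathcal M}$ is a direct sum of $L$-submodules $V_{2i}$, each with a basis $\{u_i,v_i\}$ satisfying $u_iH=u_i$, $v_iH=-v_i$, $u_iE=v_i$, $u_iF=0$, $v_iE=0$, $v_iF=-u_i$; and, letting $U$ be the linear span of the operators $\alpha(m,a,b)$ ($m\in\mathcal M$, $a,b\in L$), $U\subseteq\Gamma(\mathcal M)$ and $N_{\mathcal M}=\sum_{\alpha\in U}L\alpha$. *)

theory Defs
  imports Complex_Main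
begin

text \<open>An algebra over a field: a vector space (scalar multiplication sm) with a bilinear product mul.
  Products are written on the right, left-normed: xyz = mul (mul x y) z.\<close>

definition bilinear_prod :: "('f::field \<Rightarrow> 'm::ab_group_add \<Rightarrow> 'm) \<Rightarrow> ('m \<Rightarrow> 'm \<Rightarrow> 'm) \<Rightarrow> bool" where
  "bilinear_prod sm mul \<longleftrightarrow>
     (\<forall>x y z. mul (x + y) z = mul x z + mul y z \<and> mul x (y + z) = mul x y + mul x z) \<and>
     (\<forall>c x y. mul (sm c x) y = sm c (mul x y) \<and> mul x (sm c y) = sm c (mul x y))"

definition malcev :: "('f::field \<Rightarrow> 'm::ab_group_add \<Rightarrow> 'm) \<Rightarrow> ('m \<Rightarrow> 'm \<Rightarrow> 'm) \<Rightarrow> bool" where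
  "malcev sm mul \<longleftrightarrow> Vector_Spaces.vector_space sm \<and> bilinear_prod sm mul \<and>
     (\<forall>x. mul x x = 0) \<and>
     (\<forall>x y z t. mul (mul x z) (mul y t) =
        mul (mul (mul x y) z) t + mul (mul (mul y z) t) x + mul (mul (mul z t) x) y
        + mul (mul (mul t x) y) z)"

definition jacobian :: "('m::ab_group_add \<Rightarrow> 'm \<Rightarrow> 'm) \<Rightarrow> 'm \<Rightarrow> 'm \<Rightarrow> 'm \<Rightarrow> 'm" where
  "jacobian mul x y z = mul (mul x y) z + mul (mul y z) x + mul (mul z x) y"

definition trip :: "('f::field \<Rightarrow> 'm::ab_group_add \<Rightarrow> 'm) \<Rightarrow> ('m \<Rightarrow> 'm \<Rightarrow> 'm) \<Rightarrow> 'm \<Rightarrow> 'm \<Rightarrow> 'm \<Rightarrow> 'm" where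
  "trip sm mul x y z = mul (mul x y) z - mul (mul x z) y + sm 2 (mul x (mul y z))"

definition hpoly :: "('f::field \<Rightarrow> 'm::ab_group_add \<Rightarrow> 'm) \<Rightarrow> ('m \<Rightarrow> 'm \<Rightarrow> 'm) \<Rightarrow> 'm \<Rightarrow> 'm \<Rightarrow> 'm \<Rightarrow> 'm \<Rightarrow> 'm \<Rightarrow> 'm" where
  "hpoly sm mul y z t x u =
     mul (trip sm mul (mul y z) t u) x + mul (trip sm mul (mul y z) t x) u
     + mul (trip sm mul (mul y x) z u) t + mul (trip sm mul (mul y u) z x) t"

definition in_H :: "('f::field \<Rightarrow> 'm::ab_group_add \<Rightarrow> 'm) \<Rightarrow> ('m \<Rightarrow> 'm \<Rightarrow> 'm) \<Rightarrow> bool" where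
  "in_H sm mul \<longleftrightarrow> malcev sm mul \<and> (\<forall>y z t x u. hpoly sm mul y z t x u = 0)"

text \<open>Centroid (maps written on the right: x alpha = alpha x).\<close>
definition centroid :: "('f::field \<Rightarrow> 'm::ab_group_add \<Rightarrow> 'm) \<Rightarrow> ('m \<Rightarrow> 'm \<Rightarrow> 'm) \<Rightarrow> ('m \<Rightarrow> 'm) set" where
  "centroid sm mul = {\<alpha>. Vector_Spaces.linear sm sm \<alpha> \<and>
      (\<forall>x y. \<alpha> (mul x y) = mul x (\<alpha> y) \<and> \<alpha> (mul x y) = mul (\<alpha> x) y)}"

definition ppoly :: "('f::field \<Rightarrow> 'm::ab_group_add \<Rightarrow> 'm) \<Rightarrow> ('m \<Rightarrow> 'm \<Rightarrow> 'm) \<Rightarrow> 'm \<Rightarrow> 'm \<Rightarrow> 'm \<Rightarrow> 'm \<Rightarrow> 'm" where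
  "ppoly sm mul x y z t = - trip sm mul (mul z t) x y - trip sm mul (mul y t) z x + trip sm mul (mul x t) y z"

definition alpha_op :: "('f::field \<Rightarrow> 'm::ab_group_add \<Rightarrow> 'm) \<Rightarrow> ('m \<Rightarrow> 'm \<Rightarrow> 'm) \<Rightarrow> 'm \<Rightarrow> 'm \<Rightarrow> 'm \<Rightarrow> ('m \<Rightarrow> 'm)" where
  "alpha_op sm mul y z t = (\<lambda>x. ppoly sm mul x y z t)"

definition Uops :: "('f::field \<Rightarrow> 'm::ab_group_add \<Rightarrow> 'm) \<Rightarrow> ('m \<Rightarrow> 'm \<Rightarrow> 'm) \<Rightarrow> 'm set \<Rightarrow> ('m \<Rightarrow> 'm) set" where
  "Uops sm mul L = {(\<lambda>x. \<Sum>i<(n::nat). sm (c i) (alpha_op sm mul (m i) (a i) (b i) x)) | n c m a b.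
       \<forall>i<n. a i \<in> L \<and> b i \<in> L}"

definition Nset :: "('m::ab_group_add \<Rightarrow> 'm \<Rightarrow> 'm) \<Rightarrow> 'm set \<Rightarrow> 'm set" where
  "Nset mul L = {m. \<forall>a\<in>L. \<forall>b\<in>L. jacobian mul m a b = 0}"

definition Jset :: "('f::field \<Rightarrow> 'm::ab_group_add \<Rightarrow> 'm) \<Rightarrow> ('m \<Rightarrow> 'm \<Rightarrow> 'm) \<Rightarrow> 'm set \<Rightarrow> 'm set" where
  "Jset sm mul L = {m. \<forall>a\<in>L. \<forall>b\<in>L. trip sm mul m a b = 0}"

end

theory Submission
  imports Defs
begin


lemma lin_facts:
  assumes "Vector_Spaces.linear s s f"
  shows "f (x+y) = f x + f y" "f (s c x) = s c (f x)" "f (-x) = - f x" "f (x - y) = f x - f y" "f 0 = 0"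
proof -
  interpret Vector_Spaces.linear s s f by fact
  show "f (x+y) = f x + f y" "f (s c x) = s c (f x)" "f (-x) = - f x" "f (x - y) = f x - f y" "f 0 = 0"
    by (simp_all add: add scale neg diff)
qed

lemma (in vector_space) sub_all:
  assumes "subspace S"
    and "\<And>b x y. b\<in>B \<Longrightarrow> f b (x+y) = f b x + f b y"
    and "\<And>b c x. b\<in>B \<Longrightarrow> f b (scale c x) = scale c (f b x)"
  shows "subspace {x. \<forall>b\<in>B. f b x \<in> S}"
proof -
  have z: "f b 0 = 0" if "b \<in> B" for b
    using assms(3)[OF that, of 0 0] by simp
  show ?thesis using assms z unfolding subspace_def by auto
qed

theorem lemmal2:
  fixes sm :: "'f::field \<Rightarrow> 'm::ab_group_add \<Rightarrow> 'm"
    and mul :: "'m \<Rightarrow> 'm \<Rightarrow> 'm"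
    and E H F :: 'm
    and u v :: "'i \<Rightarrow> 'm"
    and I :: "'i set"
  defines "L \<equiv> module.span sm {E, H, F}"
  defines "N \<equiv> Nset mul L"
  defines "J \<equiv> Jset sm mul L"
  assumes char2: "(2::'f) \<noteq> 0" and char3: "(3::'f) \<noteq> 0"
    and inH: "in_H sm mul"
    (* L = sl_2 is a subalgebra of M *)
    and EHF_distinct: "distinct [E, H, F]"
    and EHF_indep: "\<not> module.dependent sm {E, H, F}"
    and EH: "mul E H = E" and FH: "mul F H = - F" and EF: "mul E F = sm (1/2) H"
    (* standing assumption: mL \<noteq> 0 for m \<noteq> 0 *)
    and faithful: "\<forall>m. m \<noteq> 0 \<longrightarrow> (\<exists>a\<in>L. mul m a \<noteq> 0)"
    (* known facts from prior work *)
    and dsum: "N \<inter> J = {0}" "\<forall>m. \<exists>n\<in>N. \<exists>j\<in>J. m = n + j"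
    and J_basis: "inj_on u I" "inj_on v I" "u ` I \<inter> v ` I = {}"
      "\<not> module.dependent sm (u ` I \<union> v ` I)"
      "module.span sm (u ` I \<union> v ` I) = J"
    and J_action: "\<forall>i\<in>I. mul (u i) H = u i \<and> mul (v i) H = - v i \<and> mul (u i) E = v i
        \<and> mul (u i) F = 0 \<and> mul (v i) E = 0 \<and> mul (v i) F = - u i"
    and U_centroid: "Uops sm mul L \<subseteq> centroid sm mul"
    and N_eq: "N = module.span sm (\<Union>\<alpha>\<in>Uops sm mul L. \<alpha> ` L)"
  shows "(\<forall>x\<in>N. \<forall>y\<in>N. mul x y \<in> N) \<and> (\<forall>x\<in>N. \<forall>y\<in>J. mul x y \<in> J)"
proof -
  have mal: "malcev sm mul" using inH by (simp add: in_H_def)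
  interpret vs: vector_space sm using mal by (simp add: malcev_def)
  have bl: "bilinear_prod sm mul" using mal by (simp add: malcev_def)
  have addl: "\<And>x y z. mul (x + y) z = mul x z + mul y z"
    and addr: "\<And>x y z. mul x (y + z) = mul x y + mul x z"
    and sml: "\<And>c x y. mul (sm c x) y = sm c (mul x y)"
    and smr: "\<And>c x y. mul x (sm c y) = sm c (mul x y)"
    using bl by (auto simp: bilinear_prod_def)
  have sq: "\<And>x. mul x x = 0" using mal by (simp add: malcev_def)
  have zl: "\<And>y. mul 0 y = 0" using addl[of 0 0] by simp
  have zr: "\<And>y. mul y 0 = 0" using addr[of _ 0 0] by simp
  have nl: "\<And>x y. mul (-x) y = - mul x y"
    by (metis add.right_inverse addl eq_neg_iff_add_eq_0 zl)
  have nr: "\<And>x y. mul y (-x) = - mul y x"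
    by (metis add.right_inverse addr eq_neg_iff_add_eq_0 zr)
  have anti: "\<And>x y. mul x y = - mul y x"
  proof -
    fix x y
    have "0 = mul (x+y) (x+y)" using sq by simp
    also have "\<dots> = mul x y + mul y x" unfolding addl addr by (simp add: sq)
    finally show "mul x y = - mul y x" by (metis add.commute eq_neg_iff_add_eq_0)
  qed
  have HE: "mul H E = - E" using anti[of H E] EH by simp
  have HF: "mul H F = F" using anti[of H F] FH by simp
  have FE: "mul F E = - sm (1/2) H" using anti[of F E] EF by simp
  have EE: "mul E E = 0" and HH: "mul H H = 0" and FF: "mul F F = 0" using sq by auto
  note tab = EH FH EF HE HF FE EE HH FF nl nr sml smr zl zr
  have subL: "vs.subspace L" unfolding L_def by simp
  have subN: "vs.subspace N" unfolding N_eq by simp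
  have subJ: "vs.subspace J" unfolding J_basis(5)[symmetric] by simp
  have baseL: "E \<in> L" "H \<in> L" "F \<in> L" unfolding L_def by (auto intro: vs.span_base)
  have inL: "\<And>P. vs.subspace {x. P x} \<Longrightarrow> P E \<Longrightarrow> P H \<Longrightarrow> P F \<Longrightarrow> \<forall>x\<in>L. P x"
  proof -
    fix P assume "vs.subspace {x. P x}" "P E" "P H" "P F"
    then have "L \<subseteq> {x. P x}" unfolding L_def by (intro vs.span_minimal) auto
    then show "\<forall>x\<in>L. P x" by auto
  qed
  have Lcl: "\<forall>a\<in>L. \<forall>b\<in>L. mul a b \<in> L"
  proof -
    have b1: "\<forall>b\<in>L. mul x b \<in> L" if "x \<in> {E,H,F}" for x
    proof (rule inL)
      show "vs.subspace {b. mul x b \<in> L}"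
        using vs.sub_all[OF subL, of UNIV "\<lambda>_ b. mul x b"] by (simp add: addr smr)
      show "mul x E \<in> L" "mul x H \<in> L" "mul x F \<in> L" using that baseL subL
        by (auto simp: tab vs.subspace_neg vs.subspace_scale vs.subspace_0)
    qed
    show ?thesis
    proof (rule inL)
      show "vs.subspace {a. \<forall>b\<in>L. mul a b \<in> L}"
        using vs.sub_all[OF subL, of L "\<lambda>b a. mul a b"] by (simp add: addl sml)
    qed (use b1 in auto)
  qed
  have jl: "\<And>b c. vs.subspace {x. \<forall>a\<in>b. jacobian mul x a c \<in> {0}}"
    by (rule vs.sub_all) (auto simp: jacobian_def addl addr sml smr vs.scale_right_distrib
        vs.subspace_def)
  have jcyc: "\<And>x a b. jacobian mul x a b = jacobian mul a b x"
    by (simp add: jacobian_def algebra_simps)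
  have jac: "\<forall>x\<in>L. \<forall>a\<in>L. \<forall>b\<in>L. jacobian mul x a b = 0"
  proof -
    have base: "jacobian mul x a b = 0" if "x \<in> {E,H,F}" "a \<in> {E,H,F}" "b \<in> {E,H,F}" for x a b
      using that by (auto simp: jacobian_def tab)
    have s1: "\<forall>b\<in>L. jacobian mul x a b = 0" if "x \<in> {E,H,F}" "a \<in> {E,H,F}" for x a
    proof -
      have "\<forall>b\<in>L. jacobian mul b x a = 0"
      proof (rule inL)
        show "vs.subspace {b. jacobian mul b x a = 0}" using jl[of "{x}" a] by simp
        show "jacobian mul E x a = 0" "jacobian mul H x a = 0" "jacobian mul F x a = 0"
          using base that by (auto simp only: jcyc[of _ x a] insert_iff) (metis jcyc)?
      qed
      then show ?thesis by (metis jcyc)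
    qed
    have s2: "\<forall>a\<in>L. \<forall>b\<in>L. jacobian mul x a b = 0" if "x \<in> {E,H,F}" for x
    proof -
      have "\<forall>a\<in>L. \<forall>b\<in>L. jacobian mul a b x = 0"
      proof (rule inL)
        show "vs.subspace {a. \<forall>b\<in>L. jacobian mul a b x = 0}" using jl[of L x] by simp
        have "\<forall>b\<in>L. jacobian mul c b x = 0" if "c \<in> {E,H,F}" for c
          using s1[OF \<open>x \<in> {E,H,F}\<close> that] by (metis jcyc)
        then show "\<forall>b\<in>L. jacobian mul E b x = 0" "\<forall>b\<in>L. jacobian mul H b x = 0"
          "\<forall>b\<in>L. jacobian mul F b x = 0" by auto
      qed
      then show ?thesis by (metis jcyc)
    qed
    have sp: "vs.subspace {x. \<forall>p\<in>L\<times>L. jacobian mul x (fst p) (snd p) \<in> {0}}"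
      by (rule vs.sub_all) (auto simp: jacobian_def addl addr sml smr vs.scale_right_distrib
        vs.subspace_def)
    have "\<forall>x\<in>L. \<forall>p\<in>L\<times>L. jacobian mul x (fst p) (snd p) = 0"
      by (rule inL) (use sp s2 in auto)
    then show ?thesis by auto
  qed
  have cent: "\<And>g x y. g \<in> centroid sm mul \<Longrightarrow> mul x (g y) = g (mul x y) \<and> mul (g x) y = g (mul x y)"
    unfolding centroid_def by (metis (mono_tags, lifting) mem_Collect_eq)
  have centlin: "\<And>g. g \<in> centroid sm mul \<Longrightarrow> Vector_Spaces.linear sm sm g"
    by (auto simp: centroid_def)
  have cN: "g w \<in> N" if g: "g \<in> centroid sm mul" and w: "w \<in> N" for g w
  proof -
    have "jacobian mul (g w) a b = 0" if "a \<in> L" "b \<in> L" for a b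
    proof -
      have "jacobian mul (g w) a b = g (jacobian mul w a b)"
        using cent[OF g] lin_facts(1)[OF centlin[OF g]] by (simp add: jacobian_def)
      also have "\<dots> = 0" using w that lin_facts(5)[OF centlin[OF g]]
        by (simp add: N_def Nset_def)
      finally show ?thesis .
    qed
    then show ?thesis by (simp add: N_def Nset_def)
  qed
  have cJ: "g w \<in> J" if g: "g \<in> centroid sm mul" and w: "w \<in> J" for g w
  proof -
    have "trip sm mul (g w) a b = 0" if "a \<in> L" "b \<in> L" for a b
    proof -
      have "trip sm mul (g w) a b = g (trip sm mul w a b)"
        using cent[OF g] lin_facts(1,2,4)[OF centlin[OF g]] by (simp add: trip_def)
      also have "\<dots> = 0" using w that lin_facts(5)[OF centlin[OF g]]
        by (simp add: J_def Jset_def)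
      finally show ?thesis .
    qed
    then show ?thesis by (simp add: J_def Jset_def)
  qed
  define G where "G = (\<Union>\<alpha>\<in>Uops sm mul L. \<alpha> ` L)"
  have NG: "N = vs.span G" unfolding G_def N_eq by simp
  have inN: "\<And>P. vs.subspace {x. P x} \<Longrightarrow> (\<And>g. g \<in> G \<Longrightarrow> P g) \<Longrightarrow> \<forall>x\<in>N. P x"
  proof -
    fix P assume "vs.subspace {x. P x}" "\<And>g. g \<in> G \<Longrightarrow> P g"
    then have "N \<subseteq> {x. P x}" unfolding NG by (intro vs.span_minimal) auto
    then show "\<forall>x\<in>N. P x" by auto
  qed
  have LN: "mul a b \<in> N" if "a \<in> L" "b \<in> L" for a b
    using jac Lcl that by (simp add: N_def Nset_def)
  have GG: "mul g1 g2 \<in> N" if g12: "g1 \<in> G" "g2 \<in> G" for g1 g2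
  proof -
    obtain \<alpha> a where a: "\<alpha> \<in> Uops sm mul L" "a \<in> L" "g1 = \<alpha> a" using g12(1) unfolding G_def by blast
    obtain \<beta> b where b: "\<beta> \<in> Uops sm mul L" "b \<in> L" "g2 = \<beta> b" using g12(2) unfolding G_def by blast
    have ca: "\<alpha> \<in> centroid sm mul" and cb: "\<beta> \<in> centroid sm mul" using a b U_centroid by auto
    have "mul g1 g2 = \<beta> (\<alpha> (mul a b))" using a b cent[OF ca] cent[OF cb] by simp
    then show ?thesis using cN[OF cb cN[OF ca LN[OF a(2) b(2)]]] by simp
  qed
  have part1: "\<forall>x\<in>N. \<forall>y\<in>N. mul x y \<in> N"
  proof (rule inN)
    show "vs.subspace {x. \<forall>y\<in>N. mul x y \<in> N}"
      using vs.sub_all[OF subN, of N "\<lambda>b a. mul a b"] by (simp add: addl sml)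
    fix g assume g: "g \<in> G"
    show "\<forall>y\<in>N. mul g y \<in> N"
    proof (rule inN)
      show "vs.subspace {y. mul g y \<in> N}"
        using vs.sub_all[OF subN, of UNIV "\<lambda>_ b. mul g b"] by (simp add: addr smr)
    qed (use GG g in auto)
  qed
  have JL: "\<forall>y\<in>J. \<forall>a\<in>L. mul y a \<in> J"
  proof -
    have uv: "\<forall>a\<in>L. mul y a \<in> J" if "y \<in> u ` I \<union> v ` I" for y
    proof (rule inL)
      show "vs.subspace {a. mul y a \<in> J}"
        using vs.sub_all[OF subJ, of UNIV "\<lambda>_ b. mul y b"] by (simp add: addr smr)
      have uJ: "\<And>i. i \<in> I \<Longrightarrow> u i \<in> J" "\<And>i. i \<in> I \<Longrightarrow> v i \<in> J"
        unfolding J_basis(5)[symmetric] by (auto intro: vs.span_base)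
      show "mul y E \<in> J" "mul y H \<in> J" "mul y F \<in> J"
        using that J_action uJ subJ by (auto simp: vs.subspace_neg vs.subspace_0)
    qed
    have "vs.span (u ` I \<union> v ` I) \<subseteq> {y. \<forall>a\<in>L. mul y a \<in> J}"
    proof (rule vs.span_minimal)
      show "vs.subspace {y. \<forall>a\<in>L. mul y a \<in> J}"
        using vs.sub_all[OF subJ, of L "\<lambda>b a. mul a b"] by (simp add: addl sml)
    qed (use uv in auto)
    then show ?thesis using J_basis(5) by auto
  qed
  have part2: "\<forall>x\<in>N. \<forall>y\<in>J. mul x y \<in> J"
  proof (rule inN)
    show "vs.subspace {x. \<forall>y\<in>J. mul x y \<in> J}"
      using vs.sub_all[OF subJ, of J "\<lambda>b a. mul a b"] by (simp add: addl sml)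
    fix g assume g: "g \<in> G"
    then obtain \<alpha> a where a: "\<alpha> \<in> Uops sm mul L" "a \<in> L" "g = \<alpha> a" unfolding G_def by blast
    have ca: "\<alpha> \<in> centroid sm mul" using a U_centroid by auto
    show "\<forall>y\<in>J. mul g y \<in> J"
    proof
      fix y assume y: "y \<in> J"
      have "mul g y = \<alpha> (- mul y a)" using a cent[OF ca] anti[of a y] by simp
      moreover have "- mul y a \<in> J" using JL y a(2) subJ by (simp add: vs.subspace_neg)
      ultimately show "mul g y \<in> J" using cJ[OF ca] by simp
    qed
  qed
  show ?thesis using part1 part2 by simp
qed

end
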